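(* Let $\mathcal{H}$ be a complex Hilbert space, $A\in\mathcal{B}(\mathcal{H})$ positive and $S\in\mathcal{B}_A(\mathcal{H})$. Then for every positive integer $n$, $$d\omega_A^{4n}(S)\le 4^{n-1}\left\|\left(S^{\sharp_A}S\right)^n+\left(S^{\sharp_A}S\right)^{2n}\right\|_A\left\|\left(SS^{\sharp_A}\right)^n+\left(S^{\sharp_A}S\right)^{2n}\right\|_A .$$
   Context: $\mathcal{B}(\mathcal{H})$ denotes the bounded linear operators on $\mathcal{H}$. For positive $A$, $\langle x,z\rangle_A=\langle Ax,z\rangle$ and $\|z\|_A=\|A^{1/2}z\|$. $\mathcal{B}_A(\mathcal{H})$ is the set of $S\in\mathcal{B}(\mathcal{H})$ for which some $R\in\mathcal{B}(\mathcal{H})$ satisfies $AR=S^*A$; for such $S$, $S^{\sharp_A}=A^{\dagger}S^*A$ with $A^\dagger$ the Moore–Penrose inverse of $A$. For operators $T$ bounded with respect to $\|\cdot\|_A$: $\|T\|_A=\sup_{\|z\|_A=1}\|Tz\|_A$ and $d\omega_A(T)=\sup_{\|z\|_A=1}(|\langle Tz,z\rangle_A|^2+\|Tz\|_A^4)^{1/2}$. *)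

theory Defs
  imports "HOL-Analysis.Analysis"
begin

class complex_vector = real_vector +
  fixes scaleC :: "complex \<Rightarrow> 'a \<Rightarrow> 'a" (infixr "*\<^sub>C" 75)
  assumes scaleC_add_right: "a *\<^sub>C (x + y) = a *\<^sub>C x + a *\<^sub>C y"
    and scaleC_add_left: "(a + b) *\<^sub>C x = a *\<^sub>C x + b *\<^sub>C x"
    and scaleC_scaleC: "a *\<^sub>C (b *\<^sub>C x) = (a * b) *\<^sub>C x"
    and scaleC_one: "1 *\<^sub>C x = x"
    and scaleR_scaleC: "r *\<^sub>R x = complex_of_real r *\<^sub>C x"

text \<open>Complex inner product, linear in the first and conjugate-linear in the second
  argument; the norm is the one induced by the inner product.\<close>
class complex_inner = complex_vector + real_normed_vector +
  fixes cinner :: "'a \<Rightarrow> 'a \<Rightarrow> complex"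
  assumes cinner_commute: "cinner x y = cnj (cinner y x)"
    and cinner_add_left: "cinner (x + y) z = cinner x z + cinner y z"
    and cinner_scaleC_left: "cinner (r *\<^sub>C x) y = r * cinner x y"
    and norm_eq_sqrt_cinner: "norm x = sqrt (Re (cinner x x))"

text \<open>A complex Hilbert space is a type of sort {complex_inner, complete_space}.\<close>

definition bounded_clinear :: "('a::complex_inner \<Rightarrow> 'a) \<Rightarrow> bool" where
  "bounded_clinear T \<longleftrightarrow> bounded_linear T \<and> (\<forall>c x. T (c *\<^sub>C x) = c *\<^sub>C T x)"

definition adj :: "('a::complex_inner \<Rightarrow> 'a) \<Rightarrow> ('a \<Rightarrow> 'a)" where
  "adj T = (THE T'. \<forall>x y. cinner (T x) y = cinner x (T' y))"

definition positive_op :: "('a::complex_inner \<Rightarrow> 'a) \<Rightarrow> bool" where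
  "positive_op A \<longleftrightarrow> bounded_clinear A \<and>
     (\<forall>x. Im (cinner (A x) x) = 0 \<and> 0 \<le> Re (cinner (A x) x))"

text \<open>Moore--Penrose inverse: for y in its domain R(A) + R(A)^perp, A\<dagger> y is the unique
  x in N(A)^perp with A x = P_{closure R(A)} y, i.e. with A x - y orthogonal to R(A).\<close>
definition mp_inv :: "('a::complex_inner \<Rightarrow> 'a) \<Rightarrow> ('a \<Rightarrow> 'a)" where
  "mp_inv A y = (THE x. (\<forall>z. A z = 0 \<longrightarrow> cinner x z = 0) \<and>
                        (\<forall>w. cinner (A x - y) (A w) = 0))"

definition BA :: "('a::complex_inner \<Rightarrow> 'a) \<Rightarrow> ('a \<Rightarrow> 'a) set" where
  "BA A = {S. bounded_clinear S \<and> (\<exists>R. bounded_clinear R \<and> A \<circ> R = adj S \<circ> A)}"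

definition sharpA :: "('a::complex_inner \<Rightarrow> 'a) \<Rightarrow> ('a \<Rightarrow> 'a) \<Rightarrow> ('a \<Rightarrow> 'a)" where
  "sharpA A S = mp_inv A \<circ> adj S \<circ> A"

definition innerA :: "('a::complex_inner \<Rightarrow> 'a) \<Rightarrow> 'a \<Rightarrow> 'a \<Rightarrow> complex" where
  "innerA A x z = cinner (A x) z"

text \<open>norm_A z = norm (A^{1/2} z) = sqrt (Re <Az,z>).\<close>
definition normA :: "('a::complex_inner \<Rightarrow> 'a) \<Rightarrow> 'a \<Rightarrow> real" where
  "normA A z = sqrt (Re (innerA A z z))"

text \<open>Suprema over the A-unit sphere (all quantities are nonnegative; the convention
  sup of the empty set = 0 is made explicit by inserting 0).\<close>
definition opnormA :: "('a::complex_inner \<Rightarrow> 'a) \<Rightarrow> ('a \<Rightarrow> 'a) \<Rightarrow> real" where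
  "opnormA A T = Sup (insert 0 ((\<lambda>z. normA A (T z)) ` {z. normA A z = 1}))"

definition dwA :: "('a::complex_inner \<Rightarrow> 'a) \<Rightarrow> ('a \<Rightarrow> 'a) \<Rightarrow> real" where
  "dwA A T = Sup (insert 0 ((\<lambda>z. sqrt ((cmod (innerA A (T z) z))\<^sup>2 + (normA A (T z)) ^ 4))
                           ` {z. normA A z = 1}))"

end

theory Submission
  imports Defs
begin

section \<open>Basic algebra of cinner\<close>

lemma scaleC_zero_left [simp]: "(0::complex) *\<^sub>C x = 0"
  by (metis of_real_0 scaleR_scaleC scaleR_zero_left)

lemma scaleC_zero_right [simp]: "c *\<^sub>C (0::'a::complex_vector) = 0"
  by (metis add_cancel_right_right add_0 scaleC_add_right)

lemma scaleC_minus1: "(-1::complex) *\<^sub>C x = - x"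
  by (metis of_real_1 of_real_minus scaleR_minus1_left scaleR_scaleC)

lemma cinner_zero_left [simp]: "cinner 0 y = 0"
  by (metis cinner_scaleC_left mult_zero_left scaleC_zero_left)

lemma cinner_zero_right [simp]: "cinner x 0 = 0"
  by (metis cinner_commute cinner_zero_left complex_cnj_zero)

lemma cinner_minus_left [simp]: "cinner (- x) y = - cinner x y"
  by (metis cinner_scaleC_left mult_minus1 scaleC_minus1)

lemma cinner_diff_left: "cinner (x - y) z = cinner x z - cinner y z"
  by (metis cinner_add_left cinner_minus_left diff_conv_add_uminus)

lemma cinner_add_right: "cinner x (y + z) = cinner x y + cinner x z"
  by (metis cinner_add_left cinner_commute complex_cnj_add)

lemma cinner_diff_right: "cinner x (y - z) = cinner x y - cinner x z"
  by (metis cinner_commute cinner_diff_left complex_cnj_diff)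

lemma cinner_scaleC_right: "cinner x (c *\<^sub>C y) = cnj c * cinner x y"
  by (metis cinner_commute cinner_scaleC_left complex_cnj_mult)

lemma cinner_self_Im [simp]: "Im (cinner x x) = 0"
  by (metis cinner_commute cnj.simps(2) add.inverse_unique add.commute 
        complex_cnj_cancel_iff neg_equal_zero)

lemma cinner_self_Re_nonneg: "0 \<le> Re (cinner x x)"
proof -
  have "0 \<le> sqrt (Re (cinner x x))" by (metis norm_eq_sqrt_cinner norm_ge_zero)
  then show ?thesis by simp
qed

lemma norm_sq_cinner: "(norm x)\<^sup>2 = Re (cinner x x)"
  by (simp add: norm_eq_sqrt_cinner cinner_self_Re_nonneg)

lemma cinner_self_eq: "cinner x x = complex_of_real ((norm x)\<^sup>2)"
  by (simp add: norm_sq_cinner complex_eq_iff)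

lemma cinner_self_zero: "cinner x x = 0 \<longleftrightarrow> x = 0"
  by (simp add: cinner_self_eq)

lemma cinner_eq_zero_all: "(\<And>z. cinner x z = 0) \<Longrightarrow> x = 0"
  using cinner_self_zero by blast

lemma scaleC_minus_left: "(- c) *\<^sub>C x = - (c *\<^sub>C x)"
  by (metis mult_minus1 scaleC_minus1 scaleC_scaleC)

definition clin :: "('a::complex_inner \<Rightarrow> 'a) \<Rightarrow> bool" where
  "clin P \<longleftrightarrow> (\<forall>x y. P (x + y) = P x + P y) \<and> (\<forall>c x. P (c *\<^sub>C x) = c *\<^sub>C P x)"

definition herm :: "('a::complex_inner \<Rightarrow> 'a) \<Rightarrow> bool" where
  "herm P \<longleftrightarrow> (\<forall>x y. cinner (P x) y = cinner x (P y))"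

definition posf :: "('a::complex_inner \<Rightarrow> 'a) \<Rightarrow> bool" where
  "posf P \<longleftrightarrow> (\<forall>x. 0 \<le> Re (cinner (P x) x))"

lemma clin_add: "clin P \<Longrightarrow> P (x + y) = P x + P y" by (simp add: clin_def)
lemma clin_scaleC: "clin P \<Longrightarrow> P (c *\<^sub>C x) = c *\<^sub>C P x" by (simp add: clin_def)
lemma clin_minus: "clin P \<Longrightarrow> P (- x) = - P x"
  by (metis clin_scaleC scaleC_minus1)
lemma clin_diff: "clin P \<Longrightarrow> P (x - y) = P x - P y"
  by (metis clin_add clin_minus diff_conv_add_uminus)
lemma clin_zero: "clin P \<Longrightarrow> P 0 = 0"
  by (metis clin_scaleC scaleC_zero_left)

lemma clin_id: "clin (\<lambda>x. x)" by (simp add: clin_def)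
lemma herm_id: "herm (\<lambda>x. x)" by (simp add: herm_def)
lemma posf_id: "posf (\<lambda>x. x)" by (simp add: posf_def cinner_self_Re_nonneg)

lemma herm_Im: "herm P \<Longrightarrow> Im (cinner (P y) y) = 0"
proof -
  assume h: "herm P"
  have "cinner (P y) y = cnj (cinner (P y) y)"
    using h cinner_commute unfolding herm_def by metis
  then show ?thesis by (metis cnj.simps(2) add.commute add.inverse_unique complex_cnj_cancel_iff neg_equal_zero)
qed

lemma herm_swap: "herm P \<Longrightarrow> cinner (P y) x = cnj (cinner (P x) y)"
  by (metis cinner_commute herm_def)

lemma expand_quad:
  assumes "clin P" "herm P"
  shows "Re (cinner (P (x - (complex_of_real s * cinner (P x) y) *\<^sub>C y)) (x - (complex_of_real s * cinner (P x) y) *\<^sub>C y))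
     = Re (cinner (P x) x) - 2 * s * (cmod (cinner (P x) y))\<^sup>2 + s\<^sup>2 * (cmod (cinner (P x) y))\<^sup>2 * Re (cinner (P y) y)"
proof -
  define g where "g = cinner (P x) y"
  define t where "t = complex_of_real s * g"
  have e: "cinner (P (x - t *\<^sub>C y)) (x - t *\<^sub>C y)
     = cinner (P x) x - cnj t * g - t * cinner (P y) x + t * cnj t * cinner (P y) y"
    using assms(1)
    by (simp add: clin_diff clin_scaleC cinner_diff_left cinner_diff_right cinner_scaleC_left
        cinner_scaleC_right g_def algebra_simps)
  have h1: "cinner (P y) x = cnj g" using herm_swap[OF assms(2), of y x] g_def by simp
  have h2: "Im (cinner (P y) y) = 0" using herm_Im[OF assms(2)] .
  have "Re (cinner (P (x - t *\<^sub>C y)) (x - t *\<^sub>C y))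
     = Re (cinner (P x) x) - 2 * s * (cmod g)\<^sup>2 + s\<^sup>2 * (cmod g)\<^sup>2 * Re (cinner (P y) y)"
  proof -
    obtain b where b: "cinner (P y) y = complex_of_real b" using h2 by (metis complex_is_Real_iff Reals_cases)
    have N: "g * cnj g = complex_of_real ((cmod g)\<^sup>2)" by (rule complex_norm_square[symmetric])
    have "cinner (P (x - t *\<^sub>C y)) (x - t *\<^sub>C y)
       = cinner (P x) x - cnj t * g - t * cinner (P y) x + t * cnj t * cinner (P y) y" by (rule e)
    also have "\<dots> = cinner (P x) x - 2 * complex_of_real s * (g * cnj g) + (complex_of_real s)\<^sup>2 * (g * cnj g) * complex_of_real b"
      unfolding h1 b t_def by (simp add: power2_eq_square)
    also have "\<dots> = cinner (P x) x + complex_of_real (- 2 * s * (cmod g)\<^sup>2 + s\<^sup>2 * (cmod g)\<^sup>2 * b)"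
      unfolding N by simp
    finally show ?thesis by (simp add: b)
  qed
  then show ?thesis by (simp only: g_def t_def)
qed

lemma quad_real:
  fixes a b g :: real
  assumes "0 \<le> a" "0 \<le> b" "0 \<le> g" "\<And>s. 0 \<le> a - 2 * s * g + s\<^sup>2 * g * b"
  shows "g \<le> a * b"
proof (cases "b > 0")
  case True
  have "0 \<le> a - 2 * (1/b) * g + (1/b)\<^sup>2 * g * b" using assms(4) .
  also have "\<dots> = a - g / b" using True by (simp add: power2_eq_square field_simps)
  finally show ?thesis using True by (simp add: field_simps mult.commute)
next
  case False
  then have b0: "b = 0" using assms(2) by simp
  show ?thesis
  proof (rule ccontr)
    assume "\<not> g \<le> a * b"
    then have gp: "g > 0" using b0 by simp
    have "0 \<le> a - 2 * ((a+1)/(2*g)) * g" using assms(4)[of "(a+1)/(2*g)"] b0 by simp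
    also have "\<dots> = -1" using gp by (simp add: field_simps)
    finally show False by simp
  qed
qed

lemma cauchy_schwarz_P:
  assumes "clin P" "herm P" "posf P"
  shows "(cmod (cinner (P x) y))\<^sup>2 \<le> Re (cinner (P x) x) * Re (cinner (P y) y)"
proof (rule quad_real)
  show "0 \<le> Re (cinner (P x) x)" "0 \<le> Re (cinner (P y) y)" using assms(3) posf_def by auto
  show "0 \<le> (cmod (cinner (P x) y))\<^sup>2" by simp
  fix s
  show "0 \<le> Re (cinner (P x) x) - 2 * s * (cmod (cinner (P x) y))\<^sup>2 + s\<^sup>2 * (cmod (cinner (P x) y))\<^sup>2 * Re (cinner (P y) y)"
    using expand_quad[OF assms(1,2), of x s y] assms(3) unfolding posf_def by metis
qed

lemma cauchy_schwarz_P':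
  assumes "clin P" "herm P" "posf P"
  shows "cmod (cinner (P x) y) \<le> sqrt (Re (cinner (P x) x)) * sqrt (Re (cinner (P y) y))"
proof -
  have "cmod (cinner (P x) y) = sqrt ((cmod (cinner (P x) y))\<^sup>2)" by simp
  also have "\<dots> \<le> sqrt (Re (cinner (P x) x) * Re (cinner (P y) y))"
    using cauchy_schwarz_P[OF assms] real_sqrt_le_mono by blast
  finally show ?thesis by (simp add: real_sqrt_mult)
qed

lemma cinner_cs: "cmod (cinner x y) \<le> norm x * norm y"
  using cauchy_schwarz_P'[OF clin_id herm_id posf_id, of x y] by (simp add: norm_eq_sqrt_cinner)

section \<open>Projection theorem\<close>

lemma parallelogram:
  fixes u v :: "'a::complex_inner"
  shows   "(norm (u + v))\<^sup>2 + (norm (u - v))\<^sup>2 = 2 * (norm u)\<^sup>2 + 2 * (norm v)\<^sup>2"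
  unfolding norm_sq_cinner
  by (simp add: cinner_add_left cinner_add_right cinner_diff_left cinner_diff_right)

lemma expand_quad_id:
  "(norm (x - (complex_of_real s * cinner x w) *\<^sub>C w))\<^sup>2
     = (norm x)\<^sup>2 - 2 * s * (cmod (cinner x w))\<^sup>2 + s\<^sup>2 * (cmod (cinner x w))\<^sup>2 * (norm w)\<^sup>2"
  using expand_quad[OF clin_id herm_id, of x s w] by (simp add: norm_sq_cinner)

lemma proj_exists:
  fixes M :: "'a::{complex_inner,complete_space} set"
  assumes cl: "closed M" and z: "0 \<in> M"
    and ad: "\<And>a b. a \<in> M \<Longrightarrow> b \<in> M \<Longrightarrow> a + b \<in> M"
    and sc: "\<And>c a. a \<in> M \<Longrightarrow> c *\<^sub>C a \<in> M"
  shows "\<exists>m\<in>M. \<forall>w\<in>M. cinner (y - m) w = 0"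
proof -
  have sR: "\<And>r a. a \<in> M \<Longrightarrow> r *\<^sub>R a \<in> M" using sc scaleR_scaleC by metis
  define D where "D = (\<lambda>m. norm (y - m)) ` M"
  define d where "d = Inf D"
  have Dne: "D \<noteq> {}" using z D_def by auto
  have Dbdd: "bdd_below D" unfolding D_def by (rule bdd_belowI[of _ 0]) auto
  have dle: "\<And>m. m \<in> M \<Longrightarrow> d \<le> norm (y - m)"
    unfolding d_def using Dbdd by (intro cInf_lower) (auto simp: D_def)
  have d0: "0 \<le> d" unfolding d_def using Dne by (intro cInf_greatest) (auto simp: D_def)
  have "\<forall>k::nat. \<exists>m. m \<in> M \<and> norm (y - m) < d + 1 / Suc k"
  proof
    fix k :: nat
    have "Inf D < d + 1 / Suc k" unfolding d_def by simp
    then obtain v where "v \<in> D" "v < d + 1 / Suc k" using cInf_less_iff[OF Dne Dbdd] by blast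
    then show "\<exists>m. m \<in> M \<and> norm (y - m) < d + 1 / Suc k" by (auto simp: D_def)
  qed
  then obtain ms where msM: "\<And>k. ms k \<in> M" and msd: "\<And>k. norm (y - ms k) < d + 1 / Suc k"
    by metis
  have key: "(norm (ms j - ms k))\<^sup>2 \<le> 2 * (d + 1 / Suc j)\<^sup>2 + 2 * (d + 1 / Suc k)\<^sup>2 - 4 * d\<^sup>2" for j k
  proof -
    define u where "u = y - ms j"
    define v where "v = y - ms k"
    have mid: "(1/2::real) *\<^sub>R (ms j + ms k) \<in> M" using sR ad msM by blast
    have "u + v = 2 *\<^sub>R (y - (1/2::real) *\<^sub>R (ms j + ms k))"
      unfolding u_def v_def by (simp add: algebra_simps scaleR_2)
    then have "norm (u + v) = 2 * norm (y - (1/2::real) *\<^sub>R (ms j + ms k))" by simp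
    then have "2 * d \<le> norm (u + v)" using dle[OF mid] by simp
    then have A: "4 * d\<^sup>2 \<le> (norm (u + v))\<^sup>2"
      using d0 power_mono[of "2*d" "norm (u+v)" 2] by (simp add: power2_eq_square)
    have uv: "u - v = ms k - ms j" unfolding u_def v_def by simp
    have B: "(norm u)\<^sup>2 \<le> (d + 1 / Suc j)\<^sup>2"
      using msd[of j] unfolding u_def by (intro power_mono) auto
    have C: "(norm v)\<^sup>2 \<le> (d + 1 / Suc k)\<^sup>2"
      using msd[of k] unfolding v_def by (intro power_mono) auto
    have "(norm (ms j - ms k))\<^sup>2 = (norm (u - v))\<^sup>2" using uv by (simp add: norm_minus_commute)
    also have "\<dots> = 2 * (norm u)\<^sup>2 + 2 * (norm v)\<^sup>2 - (norm (u + v))\<^sup>2"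
      using parallelogram[of u v] by simp
    finally show ?thesis using A B C by linarith
  qed
  have cauchy: "Cauchy ms"
  proof (rule CauchyI)
    fix e :: real assume e: "0 < e"
    define \<delta> where "\<delta> = min 1 (e\<^sup>2 / (8 * d + 5))"
    have \<delta>0: "0 < \<delta>" unfolding \<delta>_def using e d0 by simp
    have \<delta>1: "\<delta> \<le> 1" unfolding \<delta>_def by simp
    have \<delta>e: "\<delta> * (8 * d + 5) \<le> e\<^sup>2" unfolding \<delta>_def using d0
      by (metis min.cobounded2 pos_le_divide_eq add_nonneg_pos mult_nonneg_nonneg zero_le_numeral zero_less_numeral)
    obtain N :: nat where N: "inverse (real (Suc N)) < \<delta>" using reals_Archimedean[OF \<delta>0] by blast
    show "\<exists>M. \<forall>m\<ge>M. \<forall>n\<ge>M. norm (ms m - ms n) < e"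
    proof (intro exI allI impI)
      fix m n assume mN: "N \<le> m" and nN: "N \<le> n"
      define a where "a = 1 / real (Suc m)"
      define b where "b = 1 / real (Suc n)"
      have a0: "0 \<le> a" and b0: "0 \<le> b" unfolding a_def b_def by auto
      have "a \<le> inverse (real (Suc N))" unfolding a_def using mN
        by (simp add: inverse_eq_divide frac_le)
      then have aa: "a < \<delta>" using N by linarith
      have "b \<le> inverse (real (Suc N))" unfolding b_def using nN
        by (simp add: inverse_eq_divide frac_le)
      then have bb: "b < \<delta>" using N by linarith
      have "(norm (ms m - ms n))\<^sup>2 \<le> 2 * (d + a)\<^sup>2 + 2 * (d + b)\<^sup>2 - 4 * d\<^sup>2"
        using key[of m n] unfolding a_def b_def by simp
      also have "\<dots> = 4 * d * a + 2 * a * a + 4 * d * b + 2 * b * b" by (simp add: power2_eq_square algebra_simps)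
      also have "\<dots> < \<delta> * (8 * d + 5)"
      proof -
        have "4 * d * a \<le> 4 * d * \<delta>" using aa d0 by (intro mult_left_mono) auto
        moreover have "4 * d * b \<le> 4 * d * \<delta>" using bb d0 by (intro mult_left_mono) auto
        moreover have "a * a < \<delta>" using aa a0 \<delta>1 mult_left_le[of a a] by linarith
        moreover have "b * b < \<delta>" using bb b0 \<delta>1 mult_left_le[of b b] by linarith
        ultimately show ?thesis using \<delta>0 by (simp add: algebra_simps)
      qed
      also have "\<dots> \<le> e\<^sup>2" by (rule \<delta>e)
      finally have "(norm (ms m - ms n))\<^sup>2 < e\<^sup>2" .
      then show "norm (ms m - ms n) < e" using e by (simp add: power_less_imp_less_base)
    qed
  qed
  then obtain L where L: "ms \<longlonglongrightarrow> L" using Cauchy_convergent_iff convergent_def by blast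
  have LM: "L \<in> M" using closed_sequentially[OF cl msM L] .
  have t1: "(\<lambda>k. norm (y - ms k)) \<longlonglongrightarrow> norm (y - L)" using L by (intro tendsto_intros)
  have t2: "(\<lambda>k. d + inverse (real (Suc k))) \<longlonglongrightarrow> d"
    using tendsto_add[OF tendsto_const LIMSEQ_inverse_real_of_nat, of d] by simp
  have "norm (y - L) \<le> d"
    by (rule LIMSEQ_le[OF t1 t2]) (use msd less_imp_le in \<open>auto simp: inverse_eq_divide\<close>)
  then have opt: "\<And>m. m \<in> M \<Longrightarrow> norm (y - L) \<le> norm (y - m)" using dle by (meson order_trans)
  show ?thesis
  proof (rule bexI[OF _ LM], rule ballI)
    fix w assume w: "w \<in> M"
    define x where "x = y - L"
    define g where "g = cinner x w"
    have "(cmod g)\<^sup>2 \<le> 0 * (norm w)\<^sup>2"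
    proof (rule quad_real)
      fix s :: real
      have "L + (complex_of_real s * g) *\<^sub>C w \<in> M" using ad sc LM w by blast
      then have "norm x \<le> norm (x - (complex_of_real s * g) *\<^sub>C w)"
        using opt unfolding x_def by (metis diff_diff_eq)
      then have "(norm x)\<^sup>2 \<le> (norm (x - (complex_of_real s * g) *\<^sub>C w))\<^sup>2"
        by (intro power_mono) auto
      then show "0 \<le> 0 - 2 * s * (cmod g)\<^sup>2 + s\<^sup>2 * (cmod g)\<^sup>2 * (norm w)\<^sup>2"
        using expand_quad_id[of x s w] unfolding g_def by linarith
    qed auto
    then show "cinner (y - L) w = 0" unfolding g_def x_def by simp
  qed
qed

section \<open>Riesz representation and adjoints\<close>

lemma closed_kernel:
  fixes f :: "'a::real_normed_vector \<Rightarrow> 'b::real_normed_vector"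
  assumes "bounded_linear f"
  shows "closed {x. f x = 0}"
proof -
  have "continuous_on UNIV f" using bounded_linear.continuous_on[OF assms continuous_on_id] by simp
  then show ?thesis using closed_Collect_eq[of f "\<lambda>x. 0"] by simp
qed

lemma riesz:
  fixes f :: "'a::{complex_inner,complete_space} \<Rightarrow> complex"
  assumes bl: "bounded_linear f" and hom: "\<And>c x. f (c *\<^sub>C x) = c * f x"
  shows "\<exists>v. \<forall>x. f x = cinner x v"
proof (cases "\<forall>x. f x = 0")
  case True then show ?thesis by (intro exI[of _ 0]) simp
next
  case False
  then obtain x0 where fx0: "f x0 \<noteq> 0" by blast
  define K where "K = {x. f x = 0}"
  have "\<exists>m\<in>K. \<forall>w\<in>K. cinner (x0 - m) w = 0"
  proof (rule proj_exists)
    show "closed K" unfolding K_def by (rule closed_kernel[OF bl])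
    show "0 \<in> K" unfolding K_def using linear_simps(3)[OF bl] by simp
    show "a + b \<in> K" if "a \<in> K" "b \<in> K" for a b
      using that linear_simps(1)[OF bl] unfolding K_def by simp
    show "c *\<^sub>C a \<in> K" if "a \<in> K" for c a using that hom unfolding K_def by simp
  qed
  then obtain m where mK: "m \<in> K" and orth: "\<And>w. w \<in> K \<Longrightarrow> cinner (x0 - m) w = 0" by blast
  define w0 where "w0 = x0 - m"
  have fw0: "f w0 = f x0" unfolding w0_def using linear_simps(2)[OF bl] mK K_def by simp
  have w0nz: "w0 \<noteq> 0" using fw0 fx0 linear_simps(3)[OF bl] by auto
  have nn: "cinner w0 w0 \<noteq> 0" using w0nz cinner_self_zero by blast
  define v where "v = cnj (f w0 / cinner w0 w0) *\<^sub>C w0"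
  show ?thesis
  proof (intro exI allI)
    fix x
    have inK: "f x *\<^sub>C w0 - f w0 *\<^sub>C x \<in> K"
      unfolding K_def using linear_simps(2)[OF bl] hom by (simp add: mult.commute)
    have "cinner (f x *\<^sub>C w0 - f w0 *\<^sub>C x) w0 = cnj (cinner w0 (f x *\<^sub>C w0 - f w0 *\<^sub>C x))"
      by (rule cinner_commute)
    also have "\<dots> = 0" using orth[OF inK] unfolding w0_def by simp
    finally have "f x * cinner w0 w0 - f w0 * cinner x w0 = 0"
      by (simp add: cinner_diff_left cinner_scaleC_left)
    then have "f x = f w0 * cinner x w0 / cinner w0 w0" using nn by (simp add: field_simps)
    then show "f x = cinner x v" unfolding v_def by (simp add: cinner_scaleC_right)
  qed
qed

lemma adj_exists_fun:
  fixes S :: "'a::{complex_inner,complete_space} \<Rightarrow> 'a"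
  assumes "bounded_clinear S"
  shows "\<exists>T. \<forall>x y. cinner (S x) y = cinner x (T y)"
proof -
  have bl: "bounded_linear S" and hS: "\<And>c x. S (c *\<^sub>C x) = c *\<^sub>C S x"
    using assms unfolding bounded_clinear_def by auto
  obtain K where K: "\<And>x. norm (S x) \<le> norm x * K" using bounded_linear.pos_bounded[OF bl] by blast
  have "\<forall>y. \<exists>v. \<forall>x. cinner (S x) y = cinner x v"
  proof
    fix y
    show "\<exists>v. \<forall>x. cinner (S x) y = cinner x v"
    proof (rule riesz)
      show "bounded_linear (\<lambda>x. cinner (S x) y)"
      proof (rule bounded_linear_intro[where K = "K * norm y"])
        show "cinner (S (a + b)) y = cinner (S a) y + cinner (S b) y" for a b
          using linear_simps(1)[OF bl] by (simp add: cinner_add_left)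
        show "cinner (S (r *\<^sub>R a)) y = r *\<^sub>R cinner (S a) y" for r a
          using linear_simps(5)[OF bl] by (simp add: scaleR_scaleC cinner_scaleC_left scaleR_conv_of_real)
        show "norm (cinner (S a) y) \<le> norm a * (K * norm y)" for a
        proof -
          have "norm (cinner (S a) y) \<le> norm (S a) * norm y" by (rule cinner_cs)
          also have "\<dots> \<le> norm a * K * norm y" using K[of a] by (simp add: mult_right_mono)
          finally show ?thesis by (simp add: mult.assoc)
        qed
      qed
      show "cinner (S (c *\<^sub>C x)) y = c * cinner (S x) y" for c x
        using hS by (simp add: cinner_scaleC_left)
    qed
  qed
  then show ?thesis by metis
qed

lemma adj_char:
  fixes S :: "'a::{complex_inner,complete_space} \<Rightarrow> 'a"
  assumes "bounded_clinear S"
  shows "cinner (S x) y = cinner x (adj S y)"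
proof -
  have ex: "\<exists>!T. \<forall>x y. cinner (S x) y = cinner x (T y)"
  proof -
    obtain T where T: "\<forall>x y. cinner (S x) y = cinner x (T y)" using adj_exists_fun[OF assms] by blast
    have "T' = T" if T': "\<forall>x y. cinner (S x) y = cinner x (T' y)" for T'
    proof
      fix y
      have "cinner z (T' y - T y) = 0" for z using T T' by (simp add: cinner_diff_right)
      then show "T' y = T y" using cinner_self_zero by (metis eq_iff_diff_eq_0)
    qed
    then show ?thesis using T by blast
  qed
  show ?thesis unfolding adj_def using theI'[OF ex] by blast
qed

section \<open>Positive operators are hermitian\<close>

lemma bclin_clin: "bounded_clinear T \<Longrightarrow> clin T"
  unfolding bounded_clinear_def clin_def using linear_simps(1) by blast

lemma polarization_herm:
  assumes c: "clin P" and r: "\<And>x. Im (cinner (P x) x) = 0"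
  shows "herm P"
  unfolding herm_def
proof (intro allI)
  fix x y
  define u where "u = cinner (P x) y"
  define v where "v = cinner (P y) x"
  have e1: "cinner (P (x + y)) (x + y) = cinner (P x) x + u + v + cinner (P y) y"
    using c unfolding u_def v_def by (simp add: clin_add cinner_add_left cinner_add_right)
  have e2: "cinner (P (x + \<i> *\<^sub>C y)) (x + \<i> *\<^sub>C y) = cinner (P x) x - \<i> * u + \<i> * v + cinner (P y) y"
    using c unfolding u_def v_def
    by (simp add: clin_add clin_scaleC cinner_add_left cinner_add_right cinner_scaleC_left cinner_scaleC_right algebra_simps)
  have i1: "Im (u + v) = 0" using r[of "x+y"] r[of x] r[of y] e1 by simp
  have i2: "Re (v - u) = 0" using r[of "x + \<i> *\<^sub>C y"] r[of x] r[of y] e2 by simp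
  have "u = cnj v" using i1 i2 by (simp add: complex_eq_iff)
  then show "cinner (P x) y = cinner x (P y)" unfolding u_def v_def by (metis cinner_commute)
qed

lemma positive_props:
  assumes "positive_op A"
  shows "clin A" "herm A" "posf A" "bounded_linear A"
proof -
  show cA: "clin A" using assms bclin_clin positive_op_def by blast
  show "herm A" using polarization_herm[OF cA] assms positive_op_def by blast
  show "posf A" using assms positive_op_def posf_def by blast
  show "bounded_linear A" using assms positive_op_def bounded_clinear_def by blast
qed

section \<open>A-selfadjoint operators\<close>

definition asa :: "('a::complex_inner \<Rightarrow> 'a) \<Rightarrow> ('a \<Rightarrow> 'a) \<Rightarrow> bool" where
  "asa A W \<longleftrightarrow> (\<forall>x y. cinner (A (W x)) y = cinner (A x) (W y))"

lemma asa_pow: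
  assumes "asa A W" shows "asa A (W ^^ k)"
proof (induction k)
  case 0 then show ?case by (simp add: asa_def)
next
  case (Suc k)
  show ?case unfolding asa_def
  proof (intro allI)
    fix x y
    have "cinner (A ((W ^^ Suc k) x)) y = cinner (A (W ((W ^^ k) x))) y" by simp
    also have "\<dots> = cinner (A ((W ^^ k) x)) (W y)" using assms asa_def by blast
    also have "\<dots> = cinner (A x) ((W ^^ k) (W y))" using Suc asa_def by blast
    also have "\<dots> = cinner (A x) ((W ^^ Suc k) y)" by (simp add: funpow_swap1)
    finally show "cinner (A ((W ^^ Suc k) x)) y = cinner (A x) ((W ^^ Suc k) y)" .
  qed
qed

lemma asa_shift:
  assumes "asa A W"
  shows "cinner (A ((W ^^ i) x)) ((W ^^ j) y) = cinner (A ((W ^^ (i + j)) x)) y"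
proof -
  have "cinner (A ((W ^^ j) ((W ^^ i) x))) y = cinner (A ((W ^^ i) x)) ((W ^^ j) y)"
    using asa_pow[OF assms, of j] asa_def by blast
  moreover have "(W ^^ (i + j)) x = (W ^^ j) ((W ^^ i) x)" by (simp only: add.commute[of i j] funpow_add o_apply)
  ultimately show ?thesis by simp
qed

lemma clin_pow: "clin W \<Longrightarrow> clin (W ^^ k)"
proof (induction k)
  case 0 then show ?case by (simp add: clin_def)
next
  case (Suc k) then show ?case by (simp add: clin_def)
qed

lemma bl_pow:
  fixes W :: "'a::real_normed_vector \<Rightarrow> 'a"
  shows "bounded_linear W \<Longrightarrow> bounded_linear (W ^^ k)"
proof (induction k)
  case 0 then show ?case by (simp add: id_def bounded_linear_ident)
next
  case (Suc k)
  then have "bounded_linear (\<lambda>x. W ((W ^^ k) x))" using bounded_linear_compose by blast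
  then show ?case by (simp add: o_def)
qed

lemma norm_pow_bound:
  fixes W :: "'a::real_normed_vector \<Rightarrow> 'a"
  assumes "\<And>x. norm (W x) \<le> norm x * K" "0 \<le> K"
  shows "norm ((W ^^ m) x) \<le> K ^ m * norm x"
proof (induction m)
  case 0 then show ?case by simp
next
  case (Suc m)
  have "norm ((W ^^ Suc m) x) \<le> norm ((W ^^ m) x) * K" using assms(1) by simp
  also have "\<dots> \<le> K ^ m * norm x * K" using Suc assms(2) by (simp add: mult_right_mono)
  finally show ?case by (simp add: algebra_simps)
qed

lemma CS_A:
  assumes "clin A" "herm A" "posf A"
  shows "(cmod (cinner (A u) v))\<^sup>2 \<le> Re (cinner (A u) u) * Re (cinner (A v) v)"
  using cauchy_schwarz_P[OF assms] .

lemma bdd_lemma: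
  assumes pA: "positive_op A" and blW: "bounded_linear W" and aW: "asa A W"
  shows "\<exists>K. \<forall>z. normA A z = 1 \<longrightarrow> normA A (W z) \<le> K"
proof -
  note Ap = positive_props[OF pA]
  obtain KW where KW0: "KW > 0" and KW: "\<And>x. norm (W x) \<le> norm x * KW"
    using bounded_linear.pos_bounded[OF blW] by blast
  obtain KA where KA0: "KA > 0" and KA: "\<And>x. norm (A x) \<le> norm x * KA"
    using bounded_linear.pos_bounded[OF Ap(4)] by blast
  have "normA A (W z) \<le> KW" if z1: "normA A z = 1" for z
  proof -
    define g where "g m = normA A ((W ^^ m) z)" for m
    have g0: "0 \<le> g m" for m using Ap(3) unfolding posf_def g_def normA_def innerA_def by simp
    have re1: "Re (cinner (A z) z) = 1" using z1 unfolding normA_def innerA_def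
      using Ap(3) posf_def by (metis real_sqrt_eq_1_iff)
    have sq: "(g m)\<^sup>2 = Re (cinner (A ((W ^^ m) z)) ((W ^^ m) z))" for m
      using Ap(3) unfolding posf_def g_def normA_def innerA_def by simp
    have gsq: "(g m)\<^sup>2 \<le> g (2 * m)" for m
    proof -
      have "(g m)\<^sup>2 = Re (cinner (A ((W ^^ (2*m)) z)) z)"
        using sq[of m] asa_shift[OF aW, of m z m z] by (simp add: mult_2)
      also have "\<dots> \<le> cmod (cinner (A ((W ^^ (2*m)) z)) z)" by (rule complex_Re_le_cmod)
      also have "\<dots> \<le> sqrt (Re (cinner (A ((W ^^ (2*m)) z)) ((W ^^ (2*m)) z))) * sqrt (Re (cinner (A z) z))"
        by (rule cauchy_schwarz_P'[OF Ap(1-3)])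
      also have "\<dots> = g (2 * m)" unfolding g_def normA_def innerA_def re1 by simp
      finally show ?thesis .
    qed
    have pow2: "(g 1) ^ (2 ^ k) \<le> g (2 ^ k)" for k
    proof (induction k)
      case 0 then show ?case by simp
    next
      case (Suc k)
      have "(g 1) ^ (2 ^ Suc k) = ((g 1) ^ (2 ^ k))\<^sup>2" by (simp add: power_mult[symmetric] mult.commute)
      also have "\<dots> \<le> (g (2 ^ k))\<^sup>2" using Suc g0 by (intro power_mono) (auto simp: zero_le_power)
      also have "\<dots> \<le> g (2 * 2 ^ k)" by (rule gsq)
      finally show ?case by simp
    qed
    define C where "C = sqrt KA * norm z"
    have up: "g m \<le> C * KW ^ m" for m
    proof -
      let ?v = "(W ^^ m) z"
      have "Re (cinner (A ?v) ?v) \<le> cmod (cinner (A ?v) ?v)" by (rule complex_Re_le_cmod)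
      also have "\<dots> \<le> norm (A ?v) * norm ?v" by (rule cinner_cs)
      also have "\<dots> \<le> norm ?v * KA * norm ?v" using KA[of ?v] by (simp add: mult_right_mono)
      finally have "Re (cinner (A ?v) ?v) \<le> KA * (norm ?v)\<^sup>2" by (simp add: power2_eq_square algebra_simps)
      then have "g m \<le> sqrt (KA * (norm ?v)\<^sup>2)" unfolding g_def normA_def innerA_def
        using real_sqrt_le_mono by blast
      also have "\<dots> = sqrt KA * norm ?v" by (simp add: real_sqrt_mult)
      also have "\<dots> \<le> sqrt KA * (KW ^ m * norm z)"
        using norm_pow_bound[OF KW, of m z] KW0 KA0 by (intro mult_left_mono) auto
      finally show ?thesis unfolding C_def by (simp add: algebra_simps)
    qed
    show "normA A (W z) \<le> KW"
    proof (rule ccontr)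
      assume "\<not> normA A (W z) \<le> KW"
      then have gt: "g 1 > KW" unfolding g_def by simp
      define q where "q = g 1 / KW"
      have q1: "q > 1" using gt KW0 unfolding q_def by simp
      have C0: "0 \<le> C" unfolding C_def using KA0 by simp
      have bound: "q ^ (2 ^ k) \<le> C" for k
      proof -
        have "(g 1) ^ (2 ^ k) \<le> C * KW ^ (2 ^ k)" using pow2[of k] up[of "2 ^ k"] by linarith
        then have "(g 1) ^ (2 ^ k) / KW ^ (2 ^ k) \<le> C" using KW0 by (simp add: divide_le_eq)
        then show ?thesis unfolding q_def by (simp add: power_divide)
      qed
      obtain k :: nat where k: "C / (q - 1) < real k" using reals_Archimedean2 by blast
      have "1 + real k * (q - 1) \<le> (1 + (q - 1)) ^ k" using q1 by (intro Bernoulli_inequality) simp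
      also have "\<dots> = q ^ k" by simp
      also have "\<dots> \<le> q ^ (2 ^ k)" using q1 by (intro power_increasing) (auto intro: less_imp_le less_exp)
      also have "\<dots> \<le> C" by (rule bound)
      finally have "real k * (q - 1) < C" by simp
      moreover have "C < real k * (q - 1)" using k q1 by (simp add: divide_less_eq mult.commute)
      ultimately show False by simp
    qed
  qed
  then show ?thesis by blast
qed

lemma holder:
  assumes pA: "positive_op A" and cW: "clin W" and aW: "asa A W"
    and pW: "\<And>x. 0 \<le> Re (cinner (A (W x)) x)" and z1: "Re (cinner (A z) z) = 1"
  shows "(Re (cinner (A (W z)) z)) ^ k \<le> Re (cinner (A ((W ^^ k) z)) z)"
proof -
  note Ap = positive_props[OF pA]
  define f where "f k = Re (cinner (A ((W ^^ k) z)) z)" for k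
  have ev: "f (2*m) = Re (cinner (A ((W ^^ m) z)) ((W ^^ m) z))" for m
    unfolding f_def using asa_shift[OF aW, of m z m z] by (simp add: mult_2)
  have od: "cinner (A ((W ^^ (Suc m)) z)) ((W ^^ m) z) = cinner (A ((W ^^ (2*m+1)) z)) z" for m
    using asa_shift[OF aW, of "Suc m" z m z] by (simp add: mult_2)
  have f0: "0 \<le> f k" for k
  proof (cases "even k")
    case True
    then obtain m where "k = 2 * m" by (auto elim: evenE)
    then show ?thesis using ev[of m] Ap(3) unfolding posf_def by simp
  next
    case False
    then obtain m where k: "k = 2 * m + 1" by (auto elim: oddE)
    have "f k = Re (cinner (A (W ((W ^^ m) z))) ((W ^^ m) z))"
      unfolding f_def k using od[of m] by simp
    then show ?thesis using pW by simp
  qed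
  have cP: "clin (\<lambda>x. A (W x))" using cW Ap(1) unfolding clin_def by simp
  have hP: "herm (\<lambda>x. A (W x))" unfolding herm_def
  proof (intro allI)
    fix x y
    have "cinner (A (W x)) y = cinner (A x) (W y)" using aW asa_def by blast
    also have "\<dots> = cinner x (A (W y))" using Ap(2) herm_def by blast
    finally show "cinner (A (W x)) y = cinner x (A (W y))" .
  qed
  have pP: "posf (\<lambda>x. A (W x))" unfolding posf_def using pW by simp
  have lc: "(f (Suc k))\<^sup>2 \<le> f k * f (Suc (Suc k))" for k
  proof (cases "even k")
    case True
    then obtain m where k: "k = 2 * m" by (auto elim: evenE)
    define g where "g = cinner (A ((W ^^ (Suc m)) z)) ((W ^^ m) z)"
    have "f (Suc k) = Re g" unfolding g_def f_def k using od[of m] by simp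
    then have "(f (Suc k))\<^sup>2 \<le> (cmod g)\<^sup>2" by (simp add: cmod_power2)
    also have "\<dots> \<le> Re (cinner (A ((W ^^ (Suc m)) z)) ((W ^^ (Suc m)) z)) * Re (cinner (A ((W ^^ m) z)) ((W ^^ m) z))"
      unfolding g_def by (rule CS_A[OF Ap(1-3)])
    also have "\<dots> = f (2 * Suc m) * f (2 * m)" by (simp only: ev)
    also have "\<dots> = f k * f (Suc (Suc k))" using k by simp
    finally show ?thesis .
  next
    case False
    then obtain m where k: "k = 2 * m + 1" by (auto elim: oddE)
    define u where "u = (W ^^ m) z"
    have Wu: "W u = (W ^^ Suc m) z" unfolding u_def by simp
    define g where "g = cinner (A (W u)) (W u)"
    have "f (Suc k) = Re g" unfolding g_def Wu using ev[of "Suc m"] k by simp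
    then have "(f (Suc k))\<^sup>2 \<le> (cmod g)\<^sup>2" by (simp add: cmod_power2)
    also have "\<dots> \<le> Re (cinner (A (W u)) u) * Re (cinner (A (W (W u))) (W u))"
      unfolding g_def using CS_A[OF cP hP pP, of u "W u"] by simp
    also have "Re (cinner (A (W u)) u) = f k"
      unfolding Wu k f_def u_def using od[of m] by simp
    also have "Re (cinner (A (W (W u))) (W u)) = f (Suc (Suc k))"
    proof -
      have "W (W u) = (W ^^ Suc (Suc m)) z" using Wu by simp
      then show ?thesis unfolding Wu k f_def using od[of "Suc m"] by simp
    qed
    finally show ?thesis .
  qed
  have f0z: "f 0 = 1" unfolding f_def using z1 by simp
  have step: "f 1 * f k \<le> f (Suc k)" for k
  proof (induction k)
    case 0 then show ?case using f0z by simp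
  next
    case (Suc k)
    show ?case
    proof (cases "f (Suc k) = 0")
      case True then show ?thesis using f0 by simp
    next
      case False
      then have pos: "f (Suc k) > 0" using f0[of "Suc k"] by simp
      have "f 1 * (f (Suc k))\<^sup>2 \<le> f 1 * (f k * f (Suc (Suc k)))"
        using lc[of k] f0[of 1] by (rule mult_left_mono)
      also have "\<dots> = (f 1 * f k) * f (Suc (Suc k))" by simp
      also have "\<dots> \<le> f (Suc k) * f (Suc (Suc k))"
        using Suc.IH f0 by (rule mult_right_mono)
      finally have "f (Suc k) * (f 1 * f (Suc k)) \<le> f (Suc k) * f (Suc (Suc k))"
        by (simp add: power2_eq_square algebra_simps)
      then show ?thesis using pos by simp
    qed
  qed
  have "f 1 ^ k \<le> f k"
  proof (induction k)
    case 0 then show ?case using f0z by simp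
  next
    case (Suc k)
    have "f 1 ^ Suc k = f 1 * f 1 ^ k" by simp
    also have "\<dots> \<le> f 1 * f k" using Suc.IH f0[of 1] by (rule mult_left_mono)
    also have "\<dots> \<le> f (Suc k)" by (rule step)
    finally show ?case .
  qed
  then show ?thesis unfolding f_def by simp
qed

lemma convex_pow:
  fixes x y :: real
  assumes "0 \<le> x" "0 \<le> y" "1 \<le> n"
  shows "(x + y) ^ n \<le> 2 ^ (n - 1) * (x ^ n + y ^ n)"
proof -
  have key: "(x + y) * (x ^ k + y ^ k) \<le> 2 * (x ^ Suc k + y ^ Suc k)" for k
  proof -
    have "0 \<le> (x - y) * (x ^ k - y ^ k)"
    proof (cases "x \<le> y")
      case True
      then have "x ^ k \<le> y ^ k" using assms by (intro power_mono) auto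
      then show ?thesis using True by (intro mult_nonpos_nonpos) auto
    next
      case False
      then have "y ^ k \<le> x ^ k" using assms by (intro power_mono) auto
      then show ?thesis using False by (intro mult_nonneg_nonneg) auto
    qed
    then show ?thesis by (simp add: algebra_simps)
  qed
  have "(x + y) ^ Suc m \<le> 2 ^ m * (x ^ Suc m + y ^ Suc m)" for m
  proof (induction m)
    case 0 then show ?case by simp
  next
    case (Suc m)
    have "(x + y) ^ Suc (Suc m) = (x + y) * (x + y) ^ Suc m" by simp
    also have "\<dots> \<le> (x + y) * (2 ^ m * (x ^ Suc m + y ^ Suc m))"
      using Suc.IH assms by (intro mult_left_mono) auto
    also have "\<dots> = 2 ^ m * ((x + y) * (x ^ Suc m + y ^ Suc m))" by simp
    also have "\<dots> \<le> 2 ^ m * (2 * (x ^ Suc (Suc m) + y ^ Suc (Suc m)))"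
      using key[of "Suc m"] by (intro mult_left_mono) auto
    also have "\<dots> = 2 ^ Suc m * (x ^ Suc (Suc m) + y ^ Suc (Suc m))" by (simp only: power_Suc mult.assoc)
    finally show ?case .
  qed
  moreover obtain m where "n = Suc m" using assms(3) by (cases n) auto
  ultimately show ?thesis by simp
qed

lemma asa_add:
  assumes "clin A" "asa A W1" "asa A W2"
  shows "asa A (\<lambda>x. W1 x + W2 x)"
  using assms unfolding asa_def by (simp add: clin_add cinner_add_left cinner_add_right)

lemma unit_re:
  assumes "posf A" "normA A z = 1"
  shows "Re (cinner (A z) z) = 1"
  using assms unfolding normA_def innerA_def posf_def by (metis real_sqrt_eq_1_iff)

lemma re_le_normA:
  assumes pA: "positive_op A" and z1: "normA A z = 1"
  shows "Re (cinner (A w) z) \<le> normA A w"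
proof -
  note Ap = positive_props[OF pA]
  have "Re (cinner (A w) z) \<le> cmod (cinner (A w) z)" by (rule complex_Re_le_cmod)
  also have "\<dots> \<le> sqrt (Re (cinner (A w) w)) * sqrt (Re (cinner (A z) z))"
    by (rule cauchy_schwarz_P'[OF Ap(1-3)])
  also have "\<dots> = normA A w" using unit_re[OF Ap(3) z1] unfolding normA_def innerA_def by simp
  finally show ?thesis .
qed

lemma opnorm_nonneg:
  assumes "\<exists>K. \<forall>z. normA A z = 1 \<longrightarrow> normA A (W z) \<le> K"
  shows "0 \<le> opnormA A W"
proof -
  obtain K where K: "\<And>z. normA A z = 1 \<Longrightarrow> normA A (W z) \<le> K" using assms(1) by blast
  have bdd: "bdd_above (insert 0 ((\<lambda>z. normA A (W z)) ` {z. normA A z = 1}))"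
    using K by (intro bdd_above_insert[THEN iffD2] bdd_aboveI2[where M = K]) auto
  show "0 \<le> opnormA A W" unfolding opnormA_def by (intro cSup_upper[OF _ bdd]) auto
qed

lemma opnorm_upper:
  assumes "\<exists>K. \<forall>z. normA A z = 1 \<longrightarrow> normA A (W z) \<le> K" "normA A z = 1"
  shows "normA A (W z) \<le> opnormA A W" "0 \<le> opnormA A W"
proof -
  obtain K where K: "\<And>z. normA A z = 1 \<Longrightarrow> normA A (W z) \<le> K" using assms(1) by blast
  have bdd: "bdd_above (insert 0 ((\<lambda>z. normA A (W z)) ` {z. normA A z = 1}))"
    using K by (intro bdd_above_insert[THEN iffD2] bdd_aboveI2[where M = K]) auto
  show "normA A (W z) \<le> opnormA A W" unfolding opnormA_def
    using assms(2) by (intro cSup_upper[OF _ bdd]) auto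
  show "0 \<le> opnormA A W" unfolding opnormA_def by (intro cSup_upper[OF _ bdd]) auto
qed

theorem theorem2p25:
  fixes A S :: "'a::{complex_inner, complete_space} \<Rightarrow> 'a" and n :: nat
  assumes "positive_op A"
    and "S \<in> BA A"
    and "n \<ge> 1"
  shows "(dwA A S) ^ (4 * n) \<le>
           4 ^ (n - 1)
           * opnormA A (\<lambda>x. ((sharpA A S \<circ> S) ^^ n) x + ((sharpA A S \<circ> S) ^^ (2 * n)) x)
           * opnormA A (\<lambda>x. ((S \<circ> sharpA A S) ^^ n) x + ((sharpA A S \<circ> S) ^^ (2 * n)) x)"
proof -
  note Ap = positive_props[OF assms(1)]
  have bcS: "bounded_clinear S" using assms(2) unfolding BA_def by blast
  obtain R where bcR: "bounded_clinear R" and ARo: "A \<circ> R = adj S \<circ> A"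
    using assms(2) unfolding BA_def by blast
  have AR: "A (R x) = adj S (A x)" for x using fun_cong[OF ARo, of x] by simp
  have hA: "cinner (A x) y = cinner x (A y)" for x y using Ap(2) herm_def by blast
  have adjS: "cinner (S x) y = cinner x (adj S y)" for x y by (rule adj_char[OF bcS])
  have cS: "clin S" and cR: "clin R" using bcS bcR bclin_clin by auto
  have blS: "bounded_linear S" and blR: "bounded_linear R"
    using bcS bcR unfolding bounded_clinear_def by auto
  have F1: "cinner (A (S x)) y = cinner (A x) (R y)" for x y
  proof -
    have "cinner (A (S x)) y = cinner (S x) (A y)" by (rule hA)
    also have "\<dots> = cinner x (A (R y))" by (simp add: adjS AR)
    also have "\<dots> = cinner (A x) (R y)" by (simp add: hA)
    finally show ?thesis .
  qed
  have F2: "cinner (A (R x)) y = cinner (A x) (S y)" for x y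
  proof -
    have "cinner (A (R x)) y = cnj (cinner y (adj S (A x)))" by (simp add: AR cinner_commute[of _ y])
    also have "\<dots> = cnj (cinner (S y) (A x))" by (simp add: adjS)
    also have "\<dots> = cinner (A x) (S y)" by (metis cinner_commute)
    finally show ?thesis .
  qed
  have A_eq: "A u = A v" if "\<And>y. cinner (A u) y = cinner (A v) y" for u v
  proof -
    have "cinner (A u - A v) y = 0" for y using that by (simp add: cinner_diff_left)
    then show ?thesis using cinner_eq_zero_all by (metis eq_iff_diff_eq_0)
  qed
  have S_cong: "A (S u) = A (S v)" if "A u = A v" for u v
    by (rule A_eq) (simp add: F1 that)
  have R_cong: "A (R u) = A (R v)" if "A u = A v" for u v
    by (rule A_eq) (simp add: F2 that)
  have sharp: "A (sharpA A S x) = A (R x)" for x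
  proof -
    define y where "y = A (R x)"
    define P where "P z \<longleftrightarrow> (\<forall>w. A w = 0 \<longrightarrow> cinner z w = 0) \<and> (\<forall>w. cinner (A z - y) (A w) = 0)" for z
    have ex: "\<exists>!z. P z"
    proof -
      have "\<exists>m\<in>{w. A w = 0}. \<forall>w\<in>{w. A w = 0}. cinner (R x - m) w = 0"
      proof (rule proj_exists)
        show "closed {w. A w = 0}" by (rule closed_kernel[OF Ap(4)])
        show "0 \<in> {w. A w = 0}" using clin_zero[OF Ap(1)] by simp
        show "a + b \<in> {w. A w = 0}" if "a \<in> {w. A w = 0}" "b \<in> {w. A w = 0}" for a b
          using that clin_add[OF Ap(1)] by simp
        show "c *\<^sub>C a \<in> {w. A w = 0}" if "a \<in> {w. A w = 0}" for c a
          using that clin_scaleC[OF Ap(1)] by simp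
      qed
      then obtain m where m: "A m = 0" and orth: "\<And>w. A w = 0 \<Longrightarrow> cinner (R x - m) w = 0" by auto
      have Pz: "P (R x - m)" unfolding P_def y_def using orth m clin_diff[OF Ap(1)] by simp
      have uniq: "z1 = z2" if "P z1" "P z2" for z1 z2
      proof -
        define d where "d = z1 - z2"
        have "cinner (A z1 - y) (A d) = 0" "cinner (A z2 - y) (A d) = 0" using that P_def by auto
        then have "cinner (A d) (A d) = 0"
          unfolding d_def clin_diff[OF Ap(1)] by (simp add: cinner_diff_left)
        then have Ad: "A d = 0" using cinner_self_zero by blast
        have "cinner z1 d = 0" "cinner z2 d = 0" using that Ad P_def by auto
        then have "cinner d d = 0" unfolding d_def by (simp add: cinner_diff_left)
        then have "d = 0" using cinner_self_zero by blast
        then show ?thesis unfolding d_def by simp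
      qed
      show ?thesis using Pz uniq by blast
    qed
    have "sharpA A S x = mp_inv A y" unfolding sharpA_def y_def by (simp add: AR)
    also have "\<dots> = (THE z. P z)" unfolding mp_inv_def P_def by simp
    finally have sx: "sharpA A S x = (THE z. P z)" .
    have Pt: "P (sharpA A S x)" unfolding sx using theI'[OF ex] .
    define z where "z = sharpA A S x"
    have "cinner (A z - y) (A (z - R x)) = 0" using Pt unfolding z_def P_def by blast
    then have "cinner (A z - y) (A z - y) = 0" unfolding y_def clin_diff[OF Ap(1)] .
    then have "A z - y = 0" using cinner_self_zero by blast
    then have "A z = y" by simp
    then show ?thesis unfolding z_def y_def .
  qed
  define T where "T = R \<circ> S"
  define U where "U = S \<circ> R"
  have iterT: "A (((sharpA A S \<circ> S) ^^ k) z) = A ((T ^^ k) z)" for k z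
  proof (induction k)
    case 0 then show ?case by simp
  next
    case (Suc k)
    have "A (((sharpA A S \<circ> S) ^^ Suc k) z) = A (sharpA A S (S (((sharpA A S \<circ> S) ^^ k) z)))" by simp
    also have "\<dots> = A (R (S (((sharpA A S \<circ> S) ^^ k) z)))" by (rule sharp)
    also have "\<dots> = A (R (S ((T ^^ k) z)))" using Suc.IH by (intro R_cong S_cong)
    also have "\<dots> = A ((T ^^ Suc k) z)" unfolding T_def by simp
    finally show ?case .
  qed
  have iterU: "A (((S \<circ> sharpA A S) ^^ k) z) = A ((U ^^ k) z)" for k z
  proof (induction k)
    case 0 then show ?case by simp
  next
    case (Suc k)
    have "A (((S \<circ> sharpA A S) ^^ Suc k) z) = A (S (sharpA A S (((S \<circ> sharpA A S) ^^ k) z)))" by simp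
    also have "\<dots> = A (S (R (((S \<circ> sharpA A S) ^^ k) z)))" by (intro S_cong sharp)
    also have "\<dots> = A (S (R ((U ^^ k) z)))" using Suc.IH by (intro R_cong S_cong)
    also have "\<dots> = A ((U ^^ Suc k) z)" unfolding U_def by simp
    finally show ?case .
  qed
  have normA_cong: "normA A u = normA A v" if "A u = A v" for u v
  proof -
    have "cinner (A u) u = cinner (A v) v"
      by (metis that hA cinner_commute)
    then show ?thesis unfolding normA_def innerA_def by simp
  qed
  define WT where "WT = (\<lambda>x. (T ^^ n) x + (T ^^ (2 * n)) x)"
  define WU where "WU = (\<lambda>x. (U ^^ n) x + (T ^^ (2 * n)) x)"
  have opT: "opnormA A (\<lambda>x. ((sharpA A S \<circ> S) ^^ n) x + ((sharpA A S \<circ> S) ^^ (2 * n)) x) = opnormA A WT"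
  proof -
    have "normA A (((sharpA A S \<circ> S) ^^ n) z + ((sharpA A S \<circ> S) ^^ (2 * n)) z) = normA A (WT z)" for z
      unfolding WT_def using iterT by (intro normA_cong) (simp add: clin_add[OF Ap(1)])
    then show ?thesis unfolding opnormA_def by simp
  qed
  have opU: "opnormA A (\<lambda>x. ((S \<circ> sharpA A S) ^^ n) x + ((sharpA A S \<circ> S) ^^ (2 * n)) x) = opnormA A WU"
  proof -
    have "normA A (((S \<circ> sharpA A S) ^^ n) z + ((sharpA A S \<circ> S) ^^ (2 * n)) z) = normA A (WU z)" for z
      unfolding WU_def using iterT iterU by (intro normA_cong) (simp add: clin_add[OF Ap(1)])
    then show ?thesis unfolding opnormA_def by simp
  qed
  have aT: "asa A T" unfolding asa_def T_def by (simp add: F1 F2)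
  have aU: "asa A U" unfolding asa_def U_def by (simp add: F1 F2)
  have cT: "clin T" and cU: "clin U" using cS cR unfolding T_def U_def clin_def by auto
  have blT: "bounded_linear T" unfolding T_def o_def by (rule bounded_linear_compose[OF blR blS])
  have blU: "bounded_linear U" unfolding U_def o_def by (rule bounded_linear_compose[OF blS blR])
  have pT: "0 \<le> Re (cinner (A (T x)) x)" for x
    unfolding T_def using F2[of "S x" x] Ap(3) unfolding posf_def by simp
  have pU: "0 \<le> Re (cinner (A (U x)) x)" for x
    unfolding U_def using F1[of "R x" x] Ap(3) unfolding posf_def by simp
  have bddT: "\<exists>K. \<forall>z. normA A z = 1 \<longrightarrow> normA A (WT z) \<le> K"
  proof (rule bdd_lemma[OF assms(1)])
    show "bounded_linear WT" unfolding WT_def by (intro bounded_linear_add bl_pow blT)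
    show "asa A WT" unfolding WT_def by (intro asa_add[OF Ap(1)] asa_pow aT)
  qed
  have bddU: "\<exists>K. \<forall>z. normA A z = 1 \<longrightarrow> normA A (WU z) \<le> K"
  proof (rule bdd_lemma[OF assms(1)])
    show "bounded_linear WU" unfolding WU_def by (intro bounded_linear_add bl_pow blT blU)
    show "asa A WU" unfolding WU_def by (intro asa_add[OF Ap(1)] asa_pow aT aU)
  qed
  define P where "P = opnormA A WT"
  define Q where "Q = opnormA A WU"
  have P0: "0 \<le> P" unfolding P_def using opnorm_nonneg[OF bddT] .
  have Q0: "0 \<le> Q" unfolding Q_def using opnorm_nonneg[OF bddU] .
  define K where "K = 4 ^ (n - 1) * P * Q"
  have K0: "0 \<le> K" unfolding K_def using P0 Q0 by simp
  have elem: "(sqrt ((cmod (innerA A (S z) z))\<^sup>2 + (normA A (S z)) ^ 4)) ^ (4 * n) \<le> K"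
    if z1: "normA A z = 1" for z
  proof -
    have re1: "Re (cinner (A z) z) = 1" by (rule unit_re[OF Ap(3) z1])
    define a where "a = Re (cinner (A (S z)) (S z))"
    define b where "b = Re (cinner (A (R z)) (R z))"
    define c where "c = (cmod (innerA A (S z) z))\<^sup>2"
    have a0: "0 \<le> a" unfolding a_def using Ap(3) posf_def by blast
    have b0: "0 \<le> b" unfolding b_def using Ap(3) posf_def by blast
    have c0: "0 \<le> c" unfolding c_def by simp
    have na: "(normA A (S z)) ^ 4 = a\<^sup>2"
    proof -
      have "(normA A (S z))\<^sup>2 = a" unfolding normA_def innerA_def a_def using a0 a_def by simp
      then show ?thesis by (metis power_mult numeral_times_numeral semiring_norm(12) semiring_norm(13) power2_eq_square mult_2_right numeral_Bit0)
    qed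
    have ca: "c \<le> a"
      using CS_A[OF Ap(1-3), of "S z" z] unfolding c_def a_def innerA_def re1 by simp
    have cb: "c \<le> b"
      using CS_A[OF Ap(1-3), of z "R z"] unfolding c_def b_def innerA_def re1 F1 by simp
    have sq: "(c + a\<^sup>2)\<^sup>2 \<le> (a + a\<^sup>2) * (b + a\<^sup>2)"
    proof -
      have "c * c \<le> a * b" using ca cb c0 a0 by (intro mult_mono) auto
      moreover have "c * a\<^sup>2 \<le> a * a\<^sup>2" using ca by (intro mult_right_mono) auto
      moreover have "c * a\<^sup>2 \<le> b * a\<^sup>2" using cb by (intro mult_right_mono) auto
      moreover have "(c + a\<^sup>2)\<^sup>2 = c * c + 2 * (c * a\<^sup>2) + a\<^sup>2 * a\<^sup>2" by (simp add: power2_eq_square algebra_simps)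
      moreover have "(a + a\<^sup>2) * (b + a\<^sup>2) = a * b + a * a\<^sup>2 + b * a\<^sup>2 + a\<^sup>2 * a\<^sup>2" by (simp add: algebra_simps)
      ultimately show ?thesis by linarith
    qed
    define e where "e = sqrt (c + (normA A (S z)) ^ 4)"
    have e2: "e\<^sup>2 = c + a\<^sup>2" unfolding e_def na using c0 by simp
    have "e ^ (4 * n) = ((e\<^sup>2)\<^sup>2) ^ n" by (simp add: power_mult[symmetric] mult.commute)
    also have "\<dots> = ((c + a\<^sup>2)\<^sup>2) ^ n" by (simp add: e2)
    also have "\<dots> \<le> ((a + a\<^sup>2) * (b + a\<^sup>2)) ^ n" using sq c0 by (intro power_mono) auto
    also have "\<dots> = (a + a\<^sup>2) ^ n * (b + a\<^sup>2) ^ n" by (simp add: power_mult_distrib)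
    finally have eb: "e ^ (4 * n) \<le> (a + a\<^sup>2) ^ n * (b + a\<^sup>2) ^ n" .
    have hT: "(a + a\<^sup>2) ^ n \<le> 2 ^ (n - 1) * (a ^ n + a ^ (2 * n))"
      using convex_pow[of a "a\<^sup>2" n] a0 assms(3) by (simp add: power_mult)
    have hU: "(b + a\<^sup>2) ^ n \<le> 2 ^ (n - 1) * (b ^ n + a ^ (2 * n))"
      using convex_pow[of b "a\<^sup>2" n] a0 b0 assms(3) by (simp add: power_mult)
    have Ta: "Re (cinner (A (T z)) z) = a" unfolding T_def a_def using F2[of "S z" z] by simp
    have Ub: "Re (cinner (A (U z)) z) = b" unfolding U_def b_def using F1[of "R z" z] by simp
    have holT: "a ^ k \<le> Re (cinner (A ((T ^^ k) z)) z)" for k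
      using holder[OF assms(1) cT aT pT re1, of k] Ta by simp
    have holU: "b ^ k \<le> Re (cinner (A ((U ^^ k) z)) z)" for k
      using holder[OF assms(1) cU aU pU re1, of k] Ub by simp
    have X: "a ^ n + a ^ (2 * n) \<le> P"
    proof -
      have "a ^ n + a ^ (2 * n) \<le> Re (cinner (A ((T ^^ n) z)) z) + Re (cinner (A ((T ^^ (2*n)) z)) z)"
        using holT[of n] holT[of "2*n"] by linarith
      also have "\<dots> = Re (cinner (A (WT z)) z)"
        unfolding WT_def by (simp add: clin_add[OF Ap(1)] cinner_add_left)
      also have "\<dots> \<le> normA A (WT z)" by (rule re_le_normA[OF assms(1) z1])
      also have "\<dots> \<le> P" unfolding P_def by (rule opnorm_upper(1)[OF bddT z1])
      finally show ?thesis .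
    qed
    have Y: "b ^ n + a ^ (2 * n) \<le> Q"
    proof -
      have "b ^ n + a ^ (2 * n) \<le> Re (cinner (A ((U ^^ n) z)) z) + Re (cinner (A ((T ^^ (2*n)) z)) z)"
        using holU[of n] holT[of "2*n"] by linarith
      also have "\<dots> = Re (cinner (A (WU z)) z)"
        unfolding WU_def by (simp add: clin_add[OF Ap(1)] cinner_add_left)
      also have "\<dots> \<le> normA A (WU z)" by (rule re_le_normA[OF assms(1) z1])
      also have "\<dots> \<le> Q" unfolding Q_def by (rule opnorm_upper(1)[OF bddU z1])
      finally show ?thesis .
    qed
    have "(a + a\<^sup>2) ^ n * (b + a\<^sup>2) ^ n \<le> (2 ^ (n - 1) * P) * (2 ^ (n - 1) * Q)"
    proof (rule mult_mono)
      show "(a + a\<^sup>2) ^ n \<le> 2 ^ (n - 1) * P" using hT X by (meson mult_left_mono order_trans zero_le_power zero_le_numeral)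
      show "(b + a\<^sup>2) ^ n \<le> 2 ^ (n - 1) * Q" using hU Y by (meson mult_left_mono order_trans zero_le_power zero_le_numeral)
      show "0 \<le> 2 ^ (n - 1) * P" using P0 by simp
      show "0 \<le> (b + a\<^sup>2) ^ n" using b0 by simp
    qed
    also have "\<dots> = K" unfolding K_def
      by (simp add: power_mult_distrib[symmetric] mult_ac)
    finally show ?thesis using eb unfolding e_def c_def by linarith
  qed
  define D where "D = insert 0 ((\<lambda>z. sqrt ((cmod (innerA A (S z) z))\<^sup>2 + (normA A (S z)) ^ 4)) ` {z. normA A z = 1})"
  have dw: "dwA A S = Sup D" unfolding dwA_def D_def by simp
  define B where "B = root (4 * n) K"
  have n4: "4 * n = Suc (4 * n - 1)" using assms(3) by simp
  have B0: "0 \<le> B" unfolding B_def using K0 by (simp add: real_root_ge_zero)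
  have BK: "B ^ (4 * n) = K" unfolding B_def using K0 assms(3) by simp
  have Dle: "x \<le> B" if "x \<in> D" for x
  proof -
    from that consider "x = 0" | z where "normA A z = 1" "x = sqrt ((cmod (innerA A (S z) z))\<^sup>2 + (normA A (S z)) ^ 4)"
      unfolding D_def by auto
    then show ?thesis
    proof cases
      case 1 then show ?thesis using B0 by simp
    next
      case (2 z)
      have "x ^ Suc (4 * n - 1) \<le> B ^ Suc (4 * n - 1)" using elem[OF 2(1)] 2(2) BK n4 by simp
      then show ?thesis using B0 by (rule power_le_imp_le_base)
    qed
  qed
  have Dne: "D \<noteq> {}" unfolding D_def by simp
  have SupB: "Sup D \<le> B" using Dne Dle by (rule cSup_least)
  have Sup0: "0 \<le> Sup D" unfolding D_def
    by (rule cSup_upper) (use Dle in \<open>auto intro!: bdd_aboveI2[where M = B] simp: D_def\<close>)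
  have "(dwA A S) ^ (4 * n) \<le> B ^ (4 * n)" unfolding dw using SupB Sup0 by (rule power_mono)
  also have "\<dots> = 4 ^ (n - 1) * opnormA A WT * opnormA A WU" using BK unfolding K_def P_def Q_def .
  finally show ?thesis unfolding opT opU .
qed

end
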